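(* Let $\mu$ be a compactly supported positive Borel measure on $\mathbb{C}$. If $P^2(\mu)=L^2(\mu)$, then $\lambda(\mu,\mathbf{m}_{z_0;r})=0$ for every $z_0\in\mathbb{C}$ and every $r>0$.
   Context: $P^2(\mu)$ denotes the closure of the polynomials $\mathbb{P}[z]$ in $L^2(\mu)$. $\mathbf{m}_{z_0;r}$ is the normalized uniform Lebesgue (arc-length) probability measure on the circle $\{|z-z_0|=r\}$. For positive Borel measures $\mu_1,\mu_2$ on $\mathbb{C}$ with finite moments and $\mu_2$ infinitely supported, $\lambda(\mu_1,\mu_2)=\inf\{\int|p|^2d\mu_1/\int|p|^2d\mu_2 : p\in\mathbb{P}[z]\setminus\{0\}\}$ (equivalently, the limit of the smallest generalized eigenvalues of the $(n+1)\times(n+1)$ truncations of the moment matrix $\mathbf{M}(\mu_1)=(\int z^i\bar z^jd\mu_1)$ with respect to those of $\mathbf{M}(\mu_2)$). *)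

theory Defs
  imports "HOL-Analysis.Analysis" "HOL-Computational_Algebra.Polynomial"
begin

definition compactly_supported :: "complex measure \<Rightarrow> bool" where
  "compactly_supported \<mu> \<longleftrightarrow>
     (\<exists>K. compact K \<and> K \<in> sets \<mu> \<and> emeasure \<mu> (space \<mu> - K) = 0)"

definition P2_eq_L2 :: "complex measure \<Rightarrow> bool" where
  "P2_eq_L2 \<mu> \<longleftrightarrow>
     (\<forall>f \<in> borel_measurable \<mu>.
        (\<integral>\<^sup>+ z. ennreal ((cmod (f z))\<^sup>2) \<partial>\<mu>) < \<infinity> \<longrightarrow>
        (\<forall>e>0. \<exists>p :: complex poly.
            (\<integral>\<^sup>+ z. ennreal ((cmod (f z - poly p z))\<^sup>2) \<partial>\<mu>) < ennreal e))"

definition circle_measure :: "complex \<Rightarrow> real \<Rightarrow> complex measure" where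
  "circle_measure z0 r =
     distr (uniform_measure lborel {0..2*pi}) borel (\<lambda>t. z0 + complex_of_real r * cis t)"

definition lambda_meas :: "complex measure \<Rightarrow> complex measure \<Rightarrow> real" where
  "lambda_meas \<mu>1 \<mu>2 =
     (INF p \<in> {p :: complex poly. p \<noteq> 0}.
        (\<integral>z. (cmod (poly p z))\<^sup>2 \<partial>\<mu>1) / (\<integral>z. (cmod (poly p z))\<^sup>2 \<partial>\<mu>2))"

end

theory Submission
  imports Defs
begin
lemma meas1: "(\<lambda>t. z0 + complex_of_real r * cis t) \<in> measurable (uniform_measure lborel {0..2*pi}) borel"
  by (subst measurable_cong_sets[OF sets_uniform_measure refl], simp, intro borel_measurable_continuous_onI continuous_intros)
lemma e1: "1 / ennreal (2*pi) = ennreal (1/(2*pi))"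
  by (subst divide_ennreal[symmetric]) auto
lemma circle_integral:
  fixes h :: "complex \<Rightarrow> real"
  assumes "continuous_on UNIV h"
  shows "integral\<^sup>L (circle_measure z0 r) h = (\<integral>t. h (z0 + of_real r * cis t) * indicator {0..2*pi} t \<partial>lborel) / (2*pi)"
proof -
  have hm: "h \<in> borel_measurable borel" using assms by (intro borel_measurable_continuous_onI) 
  have "integral\<^sup>L (circle_measure z0 r) h = integral\<^sup>L (uniform_measure lborel {0..2*pi}) (\<lambda>t. h (z0 + of_real r * cis t))"
    unfolding circle_measure_def by (rule integral_distr[OF meas1 hm])
  also have "uniform_measure lborel {0..2*pi} = density lborel (\<lambda>t. ennreal (indicator {0..2*pi} t / (2*pi)))"
    unfolding uniform_measure_def
    by (intro density_cong) (auto simp: e1 split: split_indicator)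
  also have "integral\<^sup>L \<dots> (\<lambda>t. h (z0 + of_real r * cis t)) = (\<integral>t. (indicator {0..2*pi} t / (2*pi)) *\<^sub>R h (z0 + of_real r * cis t) \<partial>lborel)"
    by (rule integral_density) (auto intro!: borel_measurable_continuous_onI continuous_intros continuous_on_compose2[OF assms])
  finally show ?thesis by (simp add: mult.commute)
qed

lemma trig0:
  assumes "n > 0"
  shows "(\<integral>t. (a * cos(real n*t) + b * sin(real n*t)) * indicator {0..2*pi} t \<partial>lborel) = 0"
proof -
  have "(\<integral>t. (a * cos(real n*t) + b * sin(real n*t)) * indicator {0..2*pi} t \<partial>lborel)
     = (\<lambda>t. (a * sin(real n*t) - b * cos(real n*t))/real n) (2*pi) - (\<lambda>t. (a * sin(real n*t) - b * cos(real n*t))/real n) 0"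
    apply (rule integral_FTC_Icc_real)
    using assms by (auto intro!: derivative_eq_intros continuous_intros simp: field_simps)
  moreover have "real n * (2*pi) = real (2*n) * pi" by simp
  hence "sin (real n * (2*pi)) = 0" "cos (real n * (2*pi)) = 1" by (simp_all only:) simp_all
  ultimately show ?thesis by simp
qed

lemma pw: "(complex_of_real r * cis t) ^ m = complex_of_real (r ^ m) * cis (real m * t)"
  by (simp only: power_mult_distrib Complex.DeMoivre of_real_power)

lemma mean_one:
  fixes s :: "complex poly"
  shows "(\<integral>t. Re (1 - of_real r * cis t * poly s (z0 + of_real r * cis t)) * indicator {0..2*pi} t \<partial>lborel) = 2*pi"
proof -
  define q where "q = pcompose s [:z0,1:]"
  define d where "d = degree q"
  define A where "A k = r^Suc k * Re (coeff q k)" for k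
  define B where "B k = - (r^Suc k * Im (coeff q k))" for k
  have eq: "Re (1 - of_real r * cis t * poly s (z0 + of_real r * cis t)) =
     1 - (\<Sum>k\<le>d. A k * cos(real (Suc k) * t) + B k * sin(real (Suc k) * t))" for t
  proof -
    have "poly s (z0 + of_real r * cis t) = poly q (of_real r * cis t)"
      by (simp add: q_def poly_pcompose)
    also have "\<dots> = (\<Sum>k\<le>d. coeff q k * (of_real r * cis t)^k)"
      by (simp add: poly_altdef d_def)
    finally have "of_real r * cis t * poly s (z0 + of_real r * cis t) =
        (\<Sum>k\<le>d. coeff q k * (of_real r * cis t)^Suc k)"
      by (simp add: sum_distrib_left mult_ac)
    also have "\<dots> = (\<Sum>k\<le>d. coeff q k * (of_real (r^Suc k) * cis (real (Suc k) * t)))"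
      by (intro sum.cong refl) (simp only: pw)
    finally show ?thesis
      by (simp add: A_def B_def Re_sum cis.sel algebra_simps del: of_nat_Suc)
  qed
  have int: "integrable lborel (\<lambda>t. (A k * cos(real (Suc k) * t) + B k * sin(real (Suc k) * t)) * indicator {0..2*pi} t)" for k
    by (rule borel_integrable_atLeastAtMost) (auto intro!: continuous_intros)
  have "(\<integral>t. Re (1 - of_real r * cis t * poly s (z0 + of_real r * cis t)) * indicator {0..2*pi} t \<partial>lborel)
     = (\<integral>t. indicator {0..2*pi} t - (\<Sum>k\<le>d. (A k * cos(real (Suc k) * t) + B k * sin(real (Suc k) * t)) * indicator {0..2*pi} t) \<partial>lborel)"
    by (intro Bochner_Integration.integral_cong refl) (simp only: eq left_diff_distrib sum_distrib_right mult_1)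
  also have "\<dots> = (\<integral>t. indicator {0..2*pi} t \<partial>lborel) - (\<Sum>k\<le>d. (\<integral>t. (A k * cos(real (Suc k) * t) + B k * sin(real (Suc k) * t)) * indicator {0..2*pi} t \<partial>lborel))"
  proof (subst Bochner_Integration.integral_diff)
    show "integrable lborel (\<lambda>t. indicator {0..2*pi} t :: real)" by simp
    show "integrable lborel (\<lambda>t. \<Sum>k\<le>d. (A k * cos(real (Suc k) * t) + B k * sin(real (Suc k) * t)) * indicator {0..2*pi} t)"
      by (intro Bochner_Integration.integrable_sum int)
  qed (subst Bochner_Integration.integral_sum, rule int, rule refl)
  also have "\<dots> = 2*pi"
    by (subst trig0) auto
  finally show ?thesis .
qed

lemma sq_bound:
  fixes g :: "real \<Rightarrow> real"
  assumes c: "continuous_on UNIV g" and m: "(\<integral>t. g t * indicator {0..2*pi} t \<partial>lborel) = 2*pi"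
  shows "(\<integral>t. (g t)\<^sup>2 * indicator {0..2*pi} t \<partial>lborel) \<ge> 2*pi"
proof -
  have ct: "isCont g x" for x using c by (simp add: continuous_on_eq_continuous_at)
  have i1: "integrable lborel (\<lambda>t. g t * indicator {0..2*pi} t)"
    by (rule borel_integrable_atLeastAtMost) (auto intro!: ct)
  have i2: "integrable lborel (\<lambda>t. (g t)\<^sup>2 * indicator {0..2*pi} t)"
    by (rule borel_integrable_atLeastAtMost) (auto intro!: continuous_intros ct)
  have i3: "integrable lborel (\<lambda>t. indicator {0..2*pi} t :: real)" by simp
  have "0 \<le> (\<integral>t. (g t - 1)\<^sup>2 * indicator {0..2*pi} t \<partial>lborel)"
    by (intro integral_nonneg_AE) auto
  also have "(\<integral>t. (g t - 1)\<^sup>2 * indicator {0..2*pi} t \<partial>lborel) =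
      (\<integral>t. ((g t)\<^sup>2 * indicator {0..2*pi} t - 2 * (g t * indicator {0..2*pi} t)) + indicator {0..2*pi} t \<partial>lborel)"
    by (intro Bochner_Integration.integral_cong refl) (simp add: power2_eq_square algebra_simps)
  also have "\<dots> = (\<integral>t. (g t)\<^sup>2 * indicator {0..2*pi} t \<partial>lborel) - 2 * (2*pi) + 2*pi"
    using i1 i2 i3 m by simp
  finally show ?thesis by simp
qed

lemma circle_lower:
  fixes s :: "complex poly"
  shows "(\<integral>z. (cmod (poly ([:-z0,1:] * (1 - [:-z0,1:] * s)) z))\<^sup>2 \<partial>circle_measure z0 r) \<ge> r\<^sup>2"
proof -
  define G where "G t = 1 - of_real r * cis t * poly s (z0 + of_real r * cis t)" for t
  have cG: "continuous_on UNIV (\<lambda>t. Re (G t))" unfolding G_def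
    by (intro continuous_intros)
  have ctG: "isCont (\<lambda>t. Re (G t)) x" for x using cG by (simp add: continuous_on_eq_continuous_at)
  have cG2: "continuous_on UNIV (\<lambda>t. cmod (G t))" unfolding G_def
    by (intro continuous_intros)
  have ctG2: "isCont (\<lambda>t. cmod (G t)) x" for x using cG2 by (simp add: continuous_on_eq_continuous_at)
  have m: "(\<integral>t. Re (G t) * indicator {0..2*pi} t \<partial>lborel) = 2*pi"
    unfolding G_def by (rule mean_one)
  have sq: "(\<integral>t. (Re (G t))\<^sup>2 * indicator {0..2*pi} t \<partial>lborel) \<ge> 2*pi"
    by (rule sq_bound[OF cG m])
  have pt: "(cmod (poly ([:-z0,1:] * (1 - [:-z0,1:] * s)) (z0 + of_real r * cis t)))\<^sup>2 = r\<^sup>2 * (cmod (G t))\<^sup>2" for t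
  proof -
    have "poly ([:-z0,1:] * (1 - [:-z0,1:] * s)) (z0 + of_real r * cis t) = of_real r * cis t * G t"
      by (simp add: G_def algebra_simps)
    then show ?thesis by (simp add: norm_mult power_mult_distrib)
  qed
  have "integral\<^sup>L (circle_measure z0 r) (\<lambda>z. (cmod (poly ([:-z0,1:] * (1 - [:-z0,1:] * s)) z))\<^sup>2)
     = (\<integral>t. (cmod (poly ([:-z0,1:] * (1 - [:-z0,1:] * s)) (z0 + of_real r * cis t)))\<^sup>2 * indicator {0..2*pi} t \<partial>lborel) / (2*pi)"
    by (rule circle_integral) (intro continuous_intros)
  also have "\<dots> = r\<^sup>2 * (\<integral>t. (cmod (G t))\<^sup>2 * indicator {0..2*pi} t \<partial>lborel) / (2*pi)"
    by (simp only: pt mult.assoc integral_mult_right_zero)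
  finally have eqI: "integral\<^sup>L (circle_measure z0 r) (\<lambda>z. (cmod (poly ([:-z0,1:] * (1 - [:-z0,1:] * s)) z))\<^sup>2) = r\<^sup>2 * (\<integral>t. (cmod (G t))\<^sup>2 * indicator {0..2*pi} t \<partial>lborel) / (2*pi)" .
  have IJ: "(\<integral>t. (cmod (G t))\<^sup>2 * indicator {0..2*pi} t \<partial>lborel) \<ge> (\<integral>t. (Re (G t))\<^sup>2 * indicator {0..2*pi} t \<partial>lborel)"
    by (intro integral_mono borel_integrable_atLeastAtMost continuous_intros ctG ctG2)
       (auto simp: indicator_def abs_Re_le_cmod power_mono intro!: power2_le_iff_abs_le[THEN iffD2])
  have "r\<^sup>2 * (2*pi) \<le> r\<^sup>2 * (\<integral>t. (cmod (G t))\<^sup>2 * indicator {0..2*pi} t \<partial>lborel)"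
    using IJ sq by (intro mult_left_mono) auto
  hence "r\<^sup>2 * (2*pi) / (2*pi) \<le> r\<^sup>2 * (\<integral>t. (cmod (G t))\<^sup>2 * indicator {0..2*pi} t \<partial>lborel) / (2*pi)"
    by (intro divide_right_mono) auto
  thus ?thesis using eqI by simp
qed

lemma ptw1:
  fixes w :: complex and d :: real
  assumes "d > 0"
  shows "cmod (w - w^2 * (cnj w / of_real ((cmod w)\<^sup>2 + d\<^sup>2))) \<le> d"
proof -
  define a where "a = (cmod w)\<^sup>2 + d\<^sup>2"
  have a: "a > 0" using assms by (simp add: a_def add_nonneg_pos)
  have "w^2 * cnj w = w * (w * cnj w)"
    by (simp add: power2_eq_square mult.assoc)
  also have "w * cnj w = of_real ((cmod w)\<^sup>2)" by (rule complex_norm_square[symmetric])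
  finally have "w^2 * cnj w = w * of_real ((cmod w)\<^sup>2)" .
  hence "w^2 * (cnj w / of_real a) = w * of_real ((cmod w)\<^sup>2) / of_real a"
    by (simp add: times_divide_eq_right)
  also have "\<dots> = w * of_real ((cmod w)\<^sup>2 / a)" by (simp add: of_real_divide)
  finally have "w - w^2 * (cnj w / of_real a) = w - w * of_real ((cmod w)\<^sup>2 / a)"
    by (rule arg_cong[where f="\<lambda>u. w - u"])
  also have "\<dots> = w * of_real (1 - (cmod w)\<^sup>2 / a)"
    by (simp only: right_diff_distrib of_real_diff of_real_1 mult_1_right)
  also have "1 - (cmod w)\<^sup>2 / a = d\<^sup>2 / a" using a unfolding a_def by (auto simp: divide_simps)
  finally have "w - w^2 * (cnj w / of_real a) = w * of_real (d\<^sup>2 / a)" .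
  hence "cmod (w - w^2 * (cnj w / of_real a)) = cmod w * \<bar>d\<^sup>2 / a\<bar>"
    by (simp only: norm_mult norm_of_real)
  also have "\<bar>d\<^sup>2 / a\<bar> = d\<^sup>2 / a" using a by simp
  also have "cmod w * (d\<^sup>2 / a) \<le> d"
  proof -
    have "cmod w * d \<le> a" unfolding a_def power2_eq_square
      using sum_squares_bound[of "cmod w" d] mult_nonneg_nonneg[OF norm_ge_zero[of w] less_imp_le[OF assms]]
      by (simp add: power2_eq_square)
    hence "cmod w * d * d \<le> a * d" using assms by (intro mult_right_mono) auto
    have "cmod w * (d\<^sup>2 / a) = (cmod w * d * d) / a" by (simp add: power2_eq_square)
    also have "\<dots> \<le> d" using \<open>cmod w * d * d \<le> a * d\<close> by (subst pos_divide_le_eq[OF a]) (simp add: mult.commute)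
    finally show ?thesis .
  qed
  finally show ?thesis by (simp add: a_def)
qed

lemma ptw2:
  fixes w f s :: complex and d R :: real
  assumes "d > 0" "cmod w \<le> R"
    and "f = cnj w / of_real ((cmod w)\<^sup>2 + d\<^sup>2)"
  shows "(cmod (w * (1 - w * s)))\<^sup>2 \<le> 2 * d\<^sup>2 + 2 * R^4 * (cmod (f - s))\<^sup>2"
proof -
  have e: "w * (1 - w * s) = (w - w^2 * f) + w^2 * (f - s)"
    by (simp add: algebra_simps power2_eq_square)
  have b1: "cmod (w - w^2 * f) \<le> d" using ptw1[OF assms(1), of w] assms(3) by simp
  have b2: "cmod (w^2 * (f - s)) \<le> R^2 * cmod (f - s)"
    by (simp add: norm_mult norm_power mult_right_mono power_mono assms(2))
  have "cmod (w * (1 - w * s)) \<le> d + R^2 * cmod (f - s)"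
    unfolding e using norm_triangle_ineq[of "w - w^2 * f" "w^2 * (f - s)"] b1 b2 by linarith
  hence "(cmod (w * (1 - w * s)))\<^sup>2 \<le> (d + R^2 * cmod (f - s))\<^sup>2"
    by (intro power_mono) auto
  also have "\<dots> \<le> 2 * d\<^sup>2 + 2 * (R^2 * cmod (f - s))\<^sup>2"
  proof -
    have "0 \<le> (d - R^2 * cmod (f - s))\<^sup>2" by simp
    thus ?thesis by (simp add: power2_eq_square algebra_simps)
  qed
  also have "(R^2 * cmod (f - s))\<^sup>2 = R^4 * (cmod (f - s))\<^sup>2"
    by (simp add: power_mult_distrib flip: power_mult)
  finally show ?thesis by (simp add: mult.assoc)
qed

lemma ptw0:
  fixes w :: complex and d :: real
  assumes "d > 0"
  shows "cmod (cnj w / of_real ((cmod w)\<^sup>2 + d\<^sup>2)) \<le> 1 / d"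
proof -
  define a where "a = (cmod w)\<^sup>2 + d\<^sup>2"
  have a: "a > 0" using assms by (simp add: a_def add_nonneg_pos)
  have "cmod w * d \<le> a" unfolding a_def power2_eq_square
    using sum_squares_bound[of "cmod w" d] mult_nonneg_nonneg[OF norm_ge_zero[of w] less_imp_le[OF assms]]
    by (simp add: power2_eq_square)
  have "cmod (cnj w / of_real a) = cmod w / a" using a by (simp add: norm_divide)
  also have "\<dots> \<le> 1 / d" using \<open>cmod w * d \<le> a\<close> a assms
    by (simp add: divide_simps mult.commute)
  finally show ?thesis by (simp add: a_def)
qed

lemma mu_small:
  fixes \<mu> :: "complex measure"
  assumes sets: "sets \<mu> = sets borel" and fin: "finite_measure \<mu>"
    and cs: "compactly_supported \<mu>" and P2: "P2_eq_L2 \<mu>" and eps: "\<epsilon> > 0"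
  shows "\<exists>s. (\<integral>z. (cmod (poly ([:-z0,1:] * (1 - [:-z0,1:] * s)) z))\<^sup>2 \<partial>\<mu>) \<le> \<epsilon>"
proof -
  interpret finite_measure \<mu> by (rule fin)
  have meas: "h \<in> borel_measurable \<mu>" if "continuous_on UNIV h" for h :: "complex \<Rightarrow> 'b::topological_space"
    using that by (subst measurable_cong_sets[OF sets refl]) (rule borel_measurable_continuous_onI)
  obtain K where K: "compact K" "K \<in> sets \<mu>" "emeasure \<mu> (space \<mu> - K) = 0"
    using cs unfolding compactly_supported_def by blast
  obtain b where b: "b > 0" "\<forall>x\<in>K. norm x \<le> b"
    using compact_imp_bounded[OF K(1)] unfolding bounded_pos by blast
  define R where "R = b + cmod z0"
  have R0: "R \<ge> 0" using b by (simp add: R_def add_nonneg_nonneg)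
  have AER: "AE z in \<mu>. cmod (z - z0) \<le> R"
  proof (rule AE_I[where N="space \<mu> - K"])
    show "{x \<in> space \<mu>. \<not> cmod (x - z0) \<le> R} \<subseteq> space \<mu> - K"
      using b norm_triangle_ineq4 unfolding R_def by (smt (verit, best) Diff_iff mem_Collect_eq subsetI)
  qed (use K in auto)
  define M where "M = measure \<mu> (space \<mu>)"
  have M0: "M \<ge> 0" by (simp add: M_def)
  define \<delta> where "\<delta> = sqrt (\<epsilon> / (4 * (M + 1)))"
  have d0: "\<delta> > 0" using eps M0 by (simp add: \<delta>_def)
  have dsq: "\<delta>\<^sup>2 = \<epsilon> / (4 * (M + 1))" using eps M0 by (simp add: \<delta>_def)
  define \<eta> where "\<eta> = \<epsilon> / (4 * (R^4 + 1))"
  have e0: "\<eta> > 0" using eps R0 by (simp add: \<eta>_def add_nonneg_pos)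
  define f where "f z = cnj (z - z0) / of_real ((cmod (z - z0))\<^sup>2 + \<delta>\<^sup>2)" for z
  have nz: "of_real ((cmod (z - z0))\<^sup>2 + \<delta>\<^sup>2) \<noteq> (0::complex)" for z
  proof -
    have "(cmod (z - z0))\<^sup>2 + \<delta>\<^sup>2 > 0" using d0 by (simp add: add_nonneg_pos)
    thus ?thesis by (simp only: of_real_eq_0_iff)
  qed
  have cf: "continuous_on UNIV f" unfolding f_def
    by (intro continuous_intros) (use nz in blast)
  have fb: "(cmod (f z))\<^sup>2 \<le> (1/\<delta>)\<^sup>2" for z
    unfolding f_def using ptw0[OF d0, of "z - z0"] by (intro power_mono) auto
  have "(\<integral>\<^sup>+ z. ennreal ((cmod (f z))\<^sup>2) \<partial>\<mu>) \<le> (\<integral>\<^sup>+ z. ennreal ((1/\<delta>)\<^sup>2) \<partial>\<mu>)"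
    by (intro nn_integral_mono ennreal_leI fb)
  also have "\<dots> < \<infinity>" by (simp add: ennreal_mult_less_top) (metis emeasure_finite top.not_eq_extremum)
  finally have fL2: "(\<integral>\<^sup>+ z. ennreal ((cmod (f z))\<^sup>2) \<partial>\<mu>) < \<infinity>" .
  obtain s where s: "(\<integral>\<^sup>+ z. ennreal ((cmod (f z - poly s z))\<^sup>2) \<partial>\<mu>) < ennreal \<eta>"
    using P2 unfolding P2_eq_L2_def using meas[OF cf] fL2 e0 by blast
  define D where "D z = (cmod (f z - poly s z))\<^sup>2" for z
  have Dm: "D \<in> borel_measurable \<mu>" unfolding D_def
    by (rule meas) (intro continuous_intros cf)
  have Dint: "integrable \<mu> D"
    unfolding integrable_iff_bounded using Dm s
    by (simp add: D_def) (metis ennreal_less_top order.strict_trans)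
  have "integral\<^sup>L \<mu> D = enn2real (\<integral>\<^sup>+ z. ennreal (D z) \<partial>\<mu>)"
    by (rule integral_eq_nn_integral[OF Dm]) (simp add: D_def)
  also have "\<dots> \<le> enn2real (ennreal \<eta>)"
    using s by (intro enn2real_mono) (auto simp: D_def)
  finally have Dle: "integral\<^sup>L \<mu> D \<le> \<eta>" using e0 by simp
  define g where "g z = 2 * \<delta>\<^sup>2 + 2 * R^4 * D z" for z
  have gint: "integrable \<mu> g" unfolding g_def using Dint by auto
  define P where "P z = (cmod (poly ([:-z0,1:] * (1 - [:-z0,1:] * s)) z))\<^sup>2" for z
  have Pm: "P \<in> borel_measurable \<mu>" unfolding P_def
    by (rule meas) (intro continuous_intros)
  have AEP: "AE z in \<mu>. P z \<le> g z"
    using AER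
  proof eventually_elim
    case (elim z)
    have "poly ([:-z0,1:] * (1 - [:-z0,1:] * s)) z = (z - z0) * (1 - (z - z0) * poly s z)"
      by (simp add: algebra_simps)
    then show ?case unfolding P_def g_def D_def
      using ptw2[OF d0 elim, of "f z" "poly s z"] by (simp add: f_def)
  qed
  have Pint: "integrable \<mu> P"
    by (rule Bochner_Integration.integrable_bound[OF gint Pm]) (use AEP in \<open>auto simp: P_def g_def D_def elim!: AE_mp\<close>)
  have "integral\<^sup>L \<mu> P \<le> integral\<^sup>L \<mu> g"
    by (rule integral_mono_AE[OF Pint gint AEP])
  also have "integral\<^sup>L \<mu> g = 2 * \<delta>\<^sup>2 * M + 2 * R^4 * integral\<^sup>L \<mu> D"
    unfolding g_def using Dint by (simp add: M_def)
  also have "\<dots> \<le> 2 * \<delta>\<^sup>2 * M + 2 * R^4 * \<eta>"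
    using Dle R0 by (intro add_left_mono mult_left_mono) auto
  also have "\<dots> \<le> \<epsilon>"
  proof -
    have "2 * \<delta>\<^sup>2 * M \<le> \<epsilon> / 2" unfolding dsq using eps M0 by (simp add: field_simps)
    moreover have "2 * R^4 * \<eta> \<le> \<epsilon> / 2"
    proof -
      have X: "R^4 \<ge> 0" using R0 by simp
      have "2 * R^4 * \<eta> = (\<epsilon> / 2) * (R^4 / (R^4 + 1))" unfolding \<eta>_def using X
        by (simp add: divide_simps add_nonneg_pos)
      also have "\<dots> \<le> (\<epsilon> / 2) * 1" using X eps by (intro mult_left_mono) (auto simp: divide_simps add_nonneg_pos)
      finally show ?thesis by simp
    qed
    ultimately show ?thesis by linarith
  qed
  finally show ?thesis unfolding P_def by blast
qed

theorem theorem3: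
  fixes \<mu> :: "complex measure"
  assumes "sets \<mu> = sets borel"
    and "finite_measure \<mu>"
    and "compactly_supported \<mu>"
    and "P2_eq_L2 \<mu>"
  shows "\<forall>z0 :: complex. \<forall>r :: real. r > 0 \<longrightarrow> lambda_meas \<mu> (circle_measure z0 r) = 0"
proof (intro allI impI)
  fix z0 :: complex and r :: real
  assume r: "r > 0"
  define Q where "Q p = (\<integral>z. (cmod (poly p z))\<^sup>2 \<partial>\<mu>) / (\<integral>z. (cmod (poly p z))\<^sup>2 \<partial>circle_measure z0 r)" for p :: "complex poly"
  define S where "S = {p :: complex poly. p \<noteq> 0}"
  have lam: "lambda_meas \<mu> (circle_measure z0 r) = (INF p \<in> S. Q p)"
    unfolding lambda_meas_def Q_def S_def ..
  have Q0: "Q p \<ge> 0" for p unfolding Q_def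
    by (intro divide_nonneg_nonneg Bochner_Integration.integral_nonneg) auto
  have Sne: "S \<noteq> {}" unfolding S_def by (auto intro!: exI[of _ 1])
  have bdd: "bdd_below (Q ` S)" by (rule bdd_belowI[of _ 0]) (auto intro: Q0)
  have ge: "(INF p \<in> S. Q p) \<ge> 0" by (rule cINF_greatest[OF Sne Q0])
  have le: "(INF p \<in> S. Q p) \<le> \<epsilon>" if eps: "\<epsilon> > 0" for \<epsilon>
  proof -
    obtain s where s: "(\<integral>z. (cmod (poly ([:-z0,1:] * (1 - [:-z0,1:] * s)) z))\<^sup>2 \<partial>\<mu>) \<le> \<epsilon> * r\<^sup>2"
      using mu_small[OF assms, of "\<epsilon> * r\<^sup>2" z0] eps r by auto
    define P where "P = [:-z0,1:] * (1 - [:-z0,1:] * s)"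
    have den: "(\<integral>z. (cmod (poly P z))\<^sup>2 \<partial>circle_measure z0 r) \<ge> r\<^sup>2"
      unfolding P_def by (rule circle_lower)
    have rpos: "r\<^sup>2 > 0" using r by simp
    have "P \<noteq> 0"
    proof
      assume "P = 0"
      then have "(\<integral>z. (cmod (poly P z))\<^sup>2 \<partial>circle_measure z0 r) = 0" by simp
      with den rpos show False by linarith
    qed
    hence PS: "P \<in> S" by (simp add: S_def)
    have "Q P \<le> (\<epsilon> * r\<^sup>2) / r\<^sup>2"
      unfolding Q_def using s den rpos eps
      by (intro frac_le) (auto simp: P_def intro!: Bochner_Integration.integral_nonneg)
    also have "\<dots> = \<epsilon>" using rpos by simp
    finally have "Q P \<le> \<epsilon>" .
    moreover have "(INF p \<in> S. Q p) \<le> Q P" by (rule cINF_lower[OF bdd PS])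
    ultimately show ?thesis by linarith
  qed
  have "(INF p \<in> S. Q p) \<le> 0"
  proof (rule ccontr)
    assume "\<not> (INF p \<in> S. Q p) \<le> 0"
    hence "(INF p \<in> S. Q p) / 2 > 0" by simp
    from le[OF this] \<open>\<not> _ \<le> 0\<close> show False by linarith
  qed
  with ge lam show "lambda_meas \<mu> (circle_measure z0 r) = 0" by linarith
qed
end
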